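(* Let $\alpha$ be a unit speed Frenet curve in $\mathbb{E}^3$ and $\beta$ an osculating mate of $\alpha$ with principal normal $\bar N$. The following are equivalent: (i) the principal normal indicatrix $\bar N$ of $\beta$ is a general helix; (ii) $\beta$ is a $C$-slant helix; (iii) $\alpha$ is a slant helix.
   Context: $\alpha:I\to\mathbb{E}^3$ is parametrized by arclength $s$, with Frenet frame $\{T,N,B\}$, curvature $\kappa>0$, torsion $\tau$. An osculating mate of $\alpha$ is a curve $\beta(s)=\int(x_1T+x_2N)ds$ with smooth $x_1,x_2$, $x_1^2+x_2^2=1$ and $\beta''\perp\mathrm{span}\{T,N\}$; $\beta$ is assumed to be a Frenet curve, unit speed in $s$, with Frenet frame $\{\bar T,\bar N,\bar B\}$, curvature $\bar\kappa$, torsion $\bar\tau$. The principal normal indicatrix of $\beta$ is the spherical curve $s\mapsto\bar N(s)$. A general helix is a curve whose tangent makes a constant angle with a fixed direction (equivalently torsion/curvature is constant). A slant helix is a curve whose principal normal makes a constant angle with a fixed direction. For a Frenet curve with frame $\{T,N,B\}$, curvature $k$, torsion $t$, the unit Darboux vector is $W=\frac{tT+kB}{\sqrt{k^2+t^2}}$, and $C=W\times N$; the curve is a $C$-slant helix if the unit vector $C$ makes a constant angle with a fixed direction. *)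

theory Defs
  imports "HOL-Analysis.Analysis"
begin

definition smooth_on :: "real set \<Rightarrow> (real \<Rightarrow> 'a::real_normed_vector) \<Rightarrow> bool" where
  "smooth_on I f \<longleftrightarrow> (\<exists>D :: nat \<Rightarrow> real \<Rightarrow> 'a. D 0 = f \<and>
      (\<forall>n. \<forall>s\<in>I. (D n has_vector_derivative D (Suc n) s) (at s)))"

definition frenet_frame ::
  "real set \<Rightarrow> (real \<Rightarrow> real^3) \<Rightarrow> (real \<Rightarrow> real^3) \<Rightarrow> (real \<Rightarrow> real^3) \<Rightarrow> (real \<Rightarrow> real^3)
     \<Rightarrow> (real \<Rightarrow> real) \<Rightarrow> (real \<Rightarrow> real) \<Rightarrow> bool" where
  "frenet_frame I g T N B k t \<longleftrightarrow> (\<forall>s\<in>I.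
      (g has_vector_derivative T s) (at s) \<and>
      (T has_vector_derivative (k s *\<^sub>R N s)) (at s) \<and>
      (N has_vector_derivative (- (k s) *\<^sub>R T s + t s *\<^sub>R B s)) (at s) \<and>
      (B has_vector_derivative (- (t s) *\<^sub>R N s)) (at s) \<and>
      norm (T s) = 1 \<and> norm (N s) = 1 \<and> T s \<bullet> N s = 0 \<and> B s = cross3 (T s) (N s) \<and>
      k s > 0)"

definition constant_angle :: "real set \<Rightarrow> (real \<Rightarrow> real^3) \<Rightarrow> bool" where
  "constant_angle I V \<longleftrightarrow> (\<exists>u c. norm u = 1 \<and> (\<forall>s\<in>I. V s \<bullet> u = c))"

definition general_helix :: "real set \<Rightarrow> (real \<Rightarrow> real^3) \<Rightarrow> bool" where
  "general_helix I g \<longleftrightarrow> constant_angle I (\<lambda>s. sgn (vector_derivative g (at s)))"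

definition slant_helix :: "real set \<Rightarrow> (real \<Rightarrow> real^3) \<Rightarrow> bool" where
  "slant_helix I N \<longleftrightarrow> constant_angle I N"

text \<open>The unit Darboux vector W = (t T + k B)/sqrt(k^2+t^2) and C = W x N.\<close>
definition darboux_unit :: "real^3 \<Rightarrow> real^3 \<Rightarrow> real \<Rightarrow> real \<Rightarrow> real^3" where
  "darboux_unit T B k t = (1 / sqrt (k\<^sup>2 + t\<^sup>2)) *\<^sub>R (t *\<^sub>R T + k *\<^sub>R B)"

definition C_slant_helix :: "real set \<Rightarrow> (real \<Rightarrow> real^3) \<Rightarrow> (real \<Rightarrow> real^3) \<Rightarrow> (real \<Rightarrow> real^3)
     \<Rightarrow> (real \<Rightarrow> real) \<Rightarrow> (real \<Rightarrow> real) \<Rightarrow> bool" where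
  "C_slant_helix I T N B k t \<longleftrightarrow>
     constant_angle I (\<lambda>s. cross3 (darboux_unit (T s) (B s) (k s) (t s)) (N s))"

end

theory Submission
  imports Defs
begin

lemma cross_triple: "cross3 (cross3 a b) c = (a \<bullet> c) *\<^sub>R b - (b \<bullet> c) *\<^sub>R a"
  by (simp add: cross3_simps forall_3)
lemma decomp:
  fixes T N v :: "real^3"
  assumes "norm T = 1" "norm N = 1" "T \<bullet> N = 0"
  shows "v = (v \<bullet> T) *\<^sub>R T + (v \<bullet> N) *\<^sub>R N + (v \<bullet> cross3 T N) *\<^sub>R cross3 T N"
proof -
  define B where "B = cross3 T N"
  define w where "w = v - ((v \<bullet> T) *\<^sub>R T + (v \<bullet> N) *\<^sub>R N + (v \<bullet> B) *\<^sub>R B)"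
  have TT: "T \<bullet> T = 1" "N \<bullet> N = 1" using assms by (simp_all add: dot_square_norm)
  have BB: "B \<bullet> B = 1" using norm_cross_dot[of T N] assms unfolding B_def
    by (simp add: dot_square_norm power2_eq_square)
  have o: "T \<bullet> B = 0" "N \<bullet> B = 0" unfolding B_def by (simp_all add: dot_cross_self)
  have wT: "w \<bullet> T = 0" "w \<bullet> N = 0" "w \<bullet> B = 0" unfolding w_def
    using TT BB o assms(3) by (simp_all add: algebra_simps inner_commute)
  have "cross3 B w = 0" unfolding B_def cross_triple using wT by (simp add: inner_commute)
  hence "cross3 B (cross3 B w) = 0" by simp
  also have "cross3 B (cross3 B w) = - cross3 (cross3 B w) B" by (rule cross_skew)
  also have "\<dots> = - ((B \<bullet> B) *\<^sub>R w - (w \<bullet> B) *\<^sub>R B)" by (simp add: cross_triple)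
  finally have "w = 0" using BB wT by simp
  thus ?thesis unfolding w_def B_def by (simp add: algebra_simps)
qed
lemma inner_deriv_const:
  fixes f g :: "real \<Rightarrow> 'a::real_inner"
  assumes "(f has_vector_derivative f') (at s)" "(g has_vector_derivative g') (at s)"
    "open I" "s \<in> I" "\<forall>x\<in>I. f x \<bullet> g x = c"
  shows "f' \<bullet> g s + f s \<bullet> g' = 0"
proof -
  have d: "((\<lambda>x. f x \<bullet> g x) has_real_derivative (f s \<bullet> g' + f' \<bullet> g s)) (at s)"
  proof -
    have "((\<lambda>x. f x \<bullet> g x) has_derivative (\<lambda>h. f s \<bullet> (h *\<^sub>R g') + (h *\<^sub>R f') \<bullet> g s)) (at s)"
      by (rule has_derivative_inner) (use assms(1,2) in \<open>auto simp: has_vector_derivative_def\<close>)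
    moreover have "(\<lambda>h. f s \<bullet> (h *\<^sub>R g') + (h *\<^sub>R f') \<bullet> g s) = (\<lambda>h. (f s \<bullet> g' + f' \<bullet> g s) * h)"
      by (auto simp: algebra_simps)
    ultimately show ?thesis by (simp add: has_field_derivative_def)
  qed
  have "((\<lambda>x. c) has_real_derivative (f s \<bullet> g' + f' \<bullet> g s)) (at s)"
    by (rule has_field_derivative_transform_within_open[OF d assms(3,4)]) (use assms(5) in auto)
  from DERIV_unique[OF this DERIV_const] show ?thesis by simp
qed
lemma sign_const:
  fixes f :: "real \<Rightarrow> real"
  assumes "continuous_on I f" "connected I" "\<forall>s\<in>I. f s \<noteq> 0"
  shows "(\<forall>s\<in>I. f s > 0) \<or> (\<forall>s\<in>I. f s < 0)"
proof (rule ccontr)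
  assume "\<not> ?thesis"
  then obtain a b where ab: "a \<in> I" "b \<in> I" "f a \<le> 0" "f b \<ge> 0" by (meson not_less)
  have c: "connected (f ` I)" using assms connected_continuous_image by blast
  have "0 \<in> f ` I"
    using connected_contains_Icc[OF c, of "f a" "f b"] ab by auto
  thus False using assms(3) by auto
qed

theorem theorem15:
  fixes I :: "real set"
    and \<alpha> \<beta> T N B Tb Nb Bb :: "real \<Rightarrow> real^3"
    and \<kappa> \<tau> \<kappa>b \<tau>b x1 x2 :: "real \<Rightarrow> real"
  assumes I: "open I" "is_interval I" "I \<noteq> {}"
    and \<alpha>_smooth: "smooth_on I \<alpha>"
    and \<alpha>_frame: "frenet_frame I \<alpha> T N B \<kappa> \<tau>"
    and x_smooth: "smooth_on I x1" "smooth_on I x2"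
    and x_unit: "\<forall>s\<in>I. (x1 s)\<^sup>2 + (x2 s)\<^sup>2 = 1"
    and \<beta>_deriv: "\<forall>s\<in>I. (\<beta> has_vector_derivative (x1 s *\<^sub>R T s + x2 s *\<^sub>R N s)) (at s)"
    and \<beta>_osc: "\<forall>s\<in>I. vector_derivative (\<lambda>r. vector_derivative \<beta> (at r)) (at s) \<bullet> T s = 0"
                "\<forall>s\<in>I. vector_derivative (\<lambda>r. vector_derivative \<beta> (at r)) (at s) \<bullet> N s = 0"
    and \<beta>_frame: "frenet_frame I \<beta> Tb Nb Bb \<kappa>b \<tau>b"
  shows "(general_helix I Nb \<longleftrightarrow> C_slant_helix I Tb Nb Bb \<kappa>b \<tau>b) \<and>
         (C_slant_helix I Tb Nb Bb \<kappa>b \<tau>b \<longleftrightarrow> slant_helix I N)"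
proof -
  have conn: "connected I" using I(2) is_interval_connected by blast
  have fa: "\<And>s. s \<in> I \<Longrightarrow> (\<alpha> has_vector_derivative T s) (at s) \<and>
      (T has_vector_derivative (\<kappa> s *\<^sub>R N s)) (at s) \<and>
      (N has_vector_derivative (- (\<kappa> s) *\<^sub>R T s + \<tau> s *\<^sub>R B s)) (at s) \<and>
      (B has_vector_derivative (- (\<tau> s) *\<^sub>R N s)) (at s) \<and>
      norm (T s) = 1 \<and> norm (N s) = 1 \<and> T s \<bullet> N s = 0 \<and> B s = cross3 (T s) (N s) \<and>
      \<kappa> s > 0" using \<alpha>_frame unfolding frenet_frame_def by blast
  have fb: "\<And>s. s \<in> I \<Longrightarrow> (\<beta> has_vector_derivative Tb s) (at s) \<and>
      (Tb has_vector_derivative (\<kappa>b s *\<^sub>R Nb s)) (at s) \<and>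
      (Nb has_vector_derivative (- (\<kappa>b s) *\<^sub>R Tb s + \<tau>b s *\<^sub>R Bb s)) (at s) \<and>
      (Bb has_vector_derivative (- (\<tau>b s) *\<^sub>R Nb s)) (at s) \<and>
      norm (Tb s) = 1 \<and> norm (Nb s) = 1 \<and> Tb s \<bullet> Nb s = 0 \<and> Bb s = cross3 (Tb s) (Nb s) \<and>
      \<kappa>b s > 0" using \<beta>_frame unfolding frenet_frame_def by blast
  have orth: "\<And>T N :: real^3. norm T = 1 \<Longrightarrow> norm N = 1 \<Longrightarrow> T \<bullet> N = 0 \<Longrightarrow>
      T \<bullet> T = 1 \<and> N \<bullet> N = 1 \<and> cross3 T N \<bullet> cross3 T N = 1 \<and> T \<bullet> cross3 T N = 0 \<and>
      N \<bullet> cross3 T N = 0 \<and> cross3 T N \<bullet> T = 0 \<and> cross3 T N \<bullet> N = 0 \<and> norm (cross3 T N) = 1"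
  proof -
    fix T N :: "real^3" assume a: "norm T = 1" "norm N = 1" "T \<bullet> N = 0"
    have "(norm (cross3 T N))\<^sup>2 = 1" using norm_cross_dot[of T N] a by simp
    hence n: "norm (cross3 T N) = 1" by (metis norm_ge_zero real_sqrt_unique real_sqrt_one)
    show "T \<bullet> T = 1 \<and> N \<bullet> N = 1 \<and> cross3 T N \<bullet> cross3 T N = 1 \<and> T \<bullet> cross3 T N = 0 \<and>
      N \<bullet> cross3 T N = 0 \<and> cross3 T N \<bullet> T = 0 \<and> cross3 T N \<bullet> N = 0 \<and> norm (cross3 T N) = 1"
      using a n by (simp add: dot_square_norm dot_cross_self inner_commute)
  qed
  have NbT: "Nb s \<bullet> T s = 0 \<and> Nb s \<bullet> N s = 0" if s: "s \<in> I" for s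
  proof -
    have "vector_derivative \<beta> (at r) = Tb r" if "r \<in> I" for r
      using fb[OF that] vector_derivative_at by blast
    hence "((\<lambda>r. vector_derivative \<beta> (at r)) has_vector_derivative (\<kappa>b s *\<^sub>R Nb s)) (at s)"
      using has_vector_derivative_transform_within_open[of Tb "\<kappa>b s *\<^sub>R Nb s" s I] fb[OF s] I(1) s
      by auto
    hence vd: "vector_derivative (\<lambda>r. vector_derivative \<beta> (at r)) (at s) = \<kappa>b s *\<^sub>R Nb s"
      by (rule vector_derivative_at)
    show ?thesis using \<beta>_osc s vd fb[OF s] by auto
  qed
  define e where "e s = Nb s \<bullet> B s" for s
  have Nbe: "Nb s = e s *\<^sub>R B s" if s: "s \<in> I" for s
    using decomp[of "T s" "N s" "Nb s"] fa[OF s] NbT[OF s] unfolding e_def by simp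
  have e1: "e s = 1 \<or> e s = -1" if s: "s \<in> I" for s
  proof -
    have "norm (Nb s) = \<bar>e s\<bar> * norm (B s)" using Nbe[OF s] by simp
    moreover have "norm (B s) = 1" using fa[OF s] orth by metis
    ultimately have "\<bar>e s\<bar> = 1" using fb[OF s] by simp
    thus ?thesis by auto
  qed
  have econt: "continuous_on I e"
  proof (rule continuous_at_imp_continuous_on, intro ballI)
    fix s assume s: "s \<in> I"
    have "isCont Nb s" "isCont B s" using fa[OF s] fb[OF s] has_vector_derivative_continuous by blast+
    thus "isCont e s" unfolding e_def[abs_def] by (intro continuous_intros)
  qed
  obtain e0 where e0: "e0 = 1 \<or> e0 = -1" "\<And>s. s \<in> I \<Longrightarrow> e s = e0"
  proof -
    have "(\<forall>s\<in>I. e s > 0) \<or> (\<forall>s\<in>I. e s < 0)" using sign_const[OF econt conn] e1 by force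
    thus ?thesis using e1 that by (metis neg_0_less_iff_less zero_less_one not_less_iff_gr_or_eq)
  qed
  obtain D where D: "D 0 = \<alpha>" "\<And>n s. s \<in> I \<Longrightarrow> (D n has_vector_derivative D (Suc n) s) (at s)"
    using \<alpha>_smooth unfolding smooth_on_def by blast
  have D1: "D 1 s = T s" if "s \<in> I" for s
    using vector_derivative_unique_at[of \<alpha> "D 1 s" s "T s"] D(2)[OF that, of 0] fa[OF that] D(1) by simp
  have D2: "D 2 s = \<kappa> s *\<^sub>R N s" if s: "s \<in> I" for s
  proof -
    have "(T has_vector_derivative D 2 s) (at s)"
      using has_vector_derivative_transform_within_open[of "D 1" "D 2 s" s I T] D(2)[OF s, of 1] I(1) s D1
      by (simp add: numeral_2_eq_2)
    thus ?thesis using vector_derivative_unique_at fa[OF s] by blast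
  qed
  have tauf: "\<tau> s = (D 3 s \<bullet> B s) / norm (D 2 s)" if s: "s \<in> I" for s
  proof -
    have "\<forall>x\<in>I. D 2 x \<bullet> B x = 0" using D2 fa orth by simp
    from inner_deriv_const[OF D(2)[OF s, of 2] _ I(1) s this, where g'="- (\<tau> s) *\<^sub>R N s"] fa[OF s]
    have "D 3 s \<bullet> B s - \<kappa> s * \<tau> s = 0" using D2[OF s] orth[of "T s" "N s"]
      by (simp add: numeral_3_eq_3 numeral_2_eq_2 dot_square_norm)
    moreover have "norm (D 2 s) = \<kappa> s" using D2[OF s] fa[OF s] by simp
    ultimately show ?thesis using fa[OF s] by (simp add: field_simps)
  qed
  have taucont: "continuous_on I \<tau>"
  proof -
    have "continuous_on I (\<lambda>s. (D 3 s \<bullet> B s) / norm (D 2 s))"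
    proof (rule continuous_at_imp_continuous_on, intro ballI)
      fix s assume s: "s \<in> I"
      have "isCont (D 3) s" "isCont (D 2) s" "isCont B s"
        using D(2)[OF s] fa[OF s] has_vector_derivative_continuous by blast+
      moreover have "norm (D 2 s) \<noteq> 0" using D2[OF s] fa[OF s] by simp
      ultimately show "isCont (\<lambda>s. (D 3 s \<bullet> B s) / norm (D 2 s)) s" by (intro continuous_intros) auto
    qed
    thus ?thesis using tauf continuous_on_cong by (metis (no_types, lifting))
  qed
  define nd where "nd s = - (\<kappa>b s) *\<^sub>R Tb s + \<tau>b s *\<^sub>R Bb s" for s
  have ndN: "nd s = (- \<tau> s * e0) *\<^sub>R N s" if s: "s \<in> I" for s
  proof -
    have dNb: "(Nb has_vector_derivative nd s) (at s)" unfolding nd_def using fb[OF s] by blast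
    have dT: "(T has_vector_derivative (\<kappa> s *\<^sub>R N s)) (at s)"
      and dN: "(N has_vector_derivative (- (\<kappa> s) *\<^sub>R T s + \<tau> s *\<^sub>R B s)) (at s)"
      and dB: "(B has_vector_derivative (- (\<tau> s) *\<^sub>R N s)) (at s)"
      using fa[OF s] by blast+
    have i1: "\<forall>x\<in>I. Nb x \<bullet> T x = 0" "\<forall>x\<in>I. Nb x \<bullet> N x = 0" "\<forall>x\<in>I. Nb x \<bullet> B x = e0"
      using NbT e0(2) unfolding e_def by auto
    have h1: "nd s \<bullet> T s + Nb s \<bullet> (\<kappa> s *\<^sub>R N s) = 0" by (rule inner_deriv_const[OF dNb dT I(1) s i1(1)])
    have h2: "nd s \<bullet> N s + Nb s \<bullet> (- (\<kappa> s) *\<^sub>R T s + \<tau> s *\<^sub>R B s) = 0" by (rule inner_deriv_const[OF dNb dN I(1) s i1(2)])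
    have h3: "nd s \<bullet> B s + Nb s \<bullet> (- (\<tau> s) *\<^sub>R N s) = 0" by (rule inner_deriv_const[OF dNb dB I(1) s i1(3)])
    have q: "Nb s \<bullet> T s = 0" "Nb s \<bullet> N s = 0" "Nb s \<bullet> B s = e0" using i1 s by auto
    have a: "nd s \<bullet> T s = 0" using h1 q by (simp add: inner_add_right)
    have b: "nd s \<bullet> N s = - \<tau> s * e0" using h2 q by (simp add: inner_add_right inner_diff_right algebra_simps)
    have c: "nd s \<bullet> B s = 0" using h3 q by (simp add: inner_add_right)
    show ?thesis using decomp[of "T s" "N s" "nd s"] fa[OF s] a b c by simp
  qed
  have ndnorm: "norm (nd s) = sqrt ((\<kappa>b s)\<^sup>2 + (\<tau>b s)\<^sup>2)" if s: "s \<in> I" for s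
  proof -
    have o: "Tb s \<bullet> Tb s = 1" "Bb s \<bullet> Bb s = 1" "Tb s \<bullet> Bb s = 0"
      using fb[OF s] orth[of "Tb s" "Nb s"] by auto
    have "(norm (nd s))\<^sup>2 = (\<kappa>b s)\<^sup>2 + (\<tau>b s)\<^sup>2"
      unfolding power2_norm_eq_inner nd_def using o
      by (simp add: inner_diff_left inner_diff_right inner_commute power2_eq_square algebra_simps)
    thus ?thesis by (simp add: real_sqrt_unique)
  qed
  have tau0: "\<tau> s \<noteq> 0" if s: "s \<in> I" for s
  proof
    assume "\<tau> s = 0"
    hence "norm (nd s) = 0" using ndN[OF s] by simp
    hence "sqrt ((\<kappa>b s)\<^sup>2 + (\<tau>b s)\<^sup>2) = 0" using ndnorm[OF s] by simp
    thus False using fb[OF s] by simp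
  qed
  obtain t0 where t0: "t0 = 1 \<or> t0 = -1" "\<And>s. s \<in> I \<Longrightarrow> sgn (\<tau> s) = t0"
  proof -
    have "(\<forall>s\<in>I. \<tau> s > 0) \<or> (\<forall>s\<in>I. \<tau> s < 0)" using sign_const[OF taucont conn] tau0 by blast
    thus ?thesis
    proof
      assume "\<forall>s\<in>I. \<tau> s > 0" thus ?thesis using that[of 1] by simp
    next
      assume "\<forall>s\<in>I. \<tau> s < 0" thus ?thesis using that[of "-1"] by simp
    qed
  qed
  define \<sigma> where "\<sigma> = - (t0 * e0)"
  have sig: "\<sigma> * \<sigma> = 1" using t0(1) e0(1) unfolding \<sigma>_def by auto
  define V where "V s = sgn (vector_derivative Nb (at s))" for s
  have VN: "V s = \<sigma> *\<^sub>R N s" if s: "s \<in> I" for s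
  proof -
    have "vector_derivative Nb (at s) = nd s" using fb[OF s] nd_def vector_derivative_at by metis
    hence "V s = sgn (- \<tau> s * e0) *\<^sub>R sgn (N s)" unfolding V_def using ndN[OF s] sgn_scaleR by metis
    moreover have "sgn (N s) = N s" using fa[OF s] by (simp add: sgn_div_norm)
    moreover have "sgn (- \<tau> s * e0) = \<sigma>" using t0(2)[OF s] e0(1) unfolding \<sigma>_def
      by (auto simp: sgn_mult)
    ultimately show ?thesis by (metis scaleR_minus_left)
  qed
  have CV: "cross3 (darboux_unit (Tb s) (Bb s) (\<kappa>b s) (\<tau>b s)) (Nb s) = V s" if s: "s \<in> I" for s
  proof -
    have "vector_derivative Nb (at s) = nd s" using fb[OF s] nd_def vector_derivative_at by metis
    hence V: "V s = (1 / sqrt ((\<kappa>b s)\<^sup>2 + (\<tau>b s)\<^sup>2)) *\<^sub>R nd s"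
      unfolding V_def sgn_div_norm using ndnorm[OF s] by (simp add: divide_inverse_commute)
    have "cross3 (Bb s) (Nb s) = - Tb s"
      using fb[OF s] orth[of "Tb s" "Nb s"] by (simp add: cross_triple)
    moreover have "cross3 (Tb s) (Nb s) = Bb s" using fb[OF s] by simp
    ultimately show ?thesis unfolding V darboux_unit_def nd_def
      by (simp add: cross_add_left cross_mult_left algebra_simps)
  qed
  have eq1: "general_helix I Nb \<longleftrightarrow> C_slant_helix I Tb Nb Bb \<kappa>b \<tau>b"
    unfolding general_helix_def C_slant_helix_def constant_angle_def V_def[symmetric]
    using CV by auto
  have eq2: "constant_angle I V \<longleftrightarrow> constant_angle I N"
  proof
    assume "constant_angle I V"
    then obtain u c where u: "norm u = 1" "\<forall>s\<in>I. V s \<bullet> u = c" unfolding constant_angle_def by blast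
    have "\<forall>s\<in>I. N s \<bullet> u = \<sigma> * c"
    proof
      fix s assume s: "s \<in> I"
      have "\<sigma> * \<sigma> * (N s \<bullet> u) = \<sigma> * c" using u(2) s VN[OF s] by auto
      thus "N s \<bullet> u = \<sigma> * c" using sig by simp
    qed
    thus "constant_angle I N" unfolding constant_angle_def using u(1) by blast
  next
    assume "constant_angle I N"
    then obtain u c where u: "norm u = 1" "\<forall>s\<in>I. N s \<bullet> u = c" unfolding constant_angle_def by blast
    have "\<forall>s\<in>I. V s \<bullet> u = \<sigma> * c" using u(2) VN by auto
    thus "constant_angle I V" unfolding constant_angle_def using u(1) by blast
  qed
  have eq3: "C_slant_helix I Tb Nb Bb \<kappa>b \<tau>b \<longleftrightarrow> constant_angle I V"
    unfolding C_slant_helix_def constant_angle_def using CV by auto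
  show ?thesis using eq1 eq2 eq3 unfolding slant_helix_def by blast
qed

end
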